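(* In the setting described in the context, assume $\gamma$ avoids the origin. Then the angle $\alpha$ satisfies $\alpha(0)=\pi/2$, $\alpha(-\beta)=\alpha(\beta)\in\{\pi/2,\,3\pi/2\}$, and $\pi/2\le\alpha(t)\le 3\pi/2$ for all $t\in[0,\beta]$.
   Context: Setting: $\mathbb{R}^2$ in polar coordinates $(r,\theta)$ with Riemannian metric $ds^2=dr^2+h(r)^2d\theta^2$ ($h$ smooth, $h>0$ on $(0,\infty)$) and smooth positive radial density $f(r)=e^{\psi(r)}$; area and length are weighted by $f$. Let $A$ be an isoperimetric region (it minimizes weighted length of boundary among regions of the same weighted area) which is spherically symmetrized: for each $r>0$, $A\cap\{|x|=r\}$ is empty, the whole circle, or a closed arc of that circle symmetric about the ray $\theta=0$. Let $\gamma:[-\beta,\beta]\to\mathbb{R}^2$ be a smooth, counterclockwise, arclength (with respect to $ds$) parametrization of the component of $\partial A$ farthest from the origin, such that $\gamma(0)$ and $\gamma(\beta)=\gamma(-\beta)$ lie on the $x$-axis, $\gamma$ is symmetric about the $x$-axis, lies above the $x$-axis on $(0,\beta)$ and below it on $(-\beta,0)$, and $\gamma(0)$ is a point of $\gamma$ farthest from the origin. Write $\gamma(t)=(r(t),\theta(t))$. Let $\hat r(t),\hat\theta(t)$ be the orthonormal basis of the tangent space at $\gamma(t)$ in the radial and angular directions, and let $\alpha(t)$ be the counterclockwise angle, measured in $ds$, from $\hat r(t)$ to $\gamma'(t)$, chosen continuously in $t$ with $\alpha(0)\in[0,2\pi)$; thus $r'=\cos\alpha$, $h(r)\theta'=\sin\alpha$.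 *)

theory Defs
  imports "HOL-Complex_Analysis.Complex_Analysis"
begin

text \<open>The plane is modelled as the type complex; polar radius = norm, and
  the point with polar coordinates (r, theta) is rcis r theta.\<close>

definition Cinf_on :: "real set \<Rightarrow> (real \<Rightarrow> 'a::real_normed_vector) \<Rightarrow> bool" where
  "Cinf_on S g \<longleftrightarrow> (\<exists>D. D 0 = g \<and>
      (\<forall>n. \<forall>t\<in>S. (D n has_vector_derivative D (Suc n) t) (at t within S)))"

text \<open>Density of the weighted Riemannian area f dA_g with respect to Lebesgue
  measure in Cartesian coordinates: dA_g = h(r) dr dtheta = (h(r)/r) dx dy.\<close>
definition wdens :: "(real \<Rightarrow> real) \<Rightarrow> (real \<Rightarrow> real) \<Rightarrow> complex \<Rightarrow> real" where
  "wdens h f z = f (norm z) * h (norm z) / norm z"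

definition wArea :: "(real \<Rightarrow> real) \<Rightarrow> (real \<Rightarrow> real) \<Rightarrow> complex set \<Rightarrow> ennreal" where
  "wArea h f E = set_nn_integral lborel E (\<lambda>z. ennreal (wdens h f z))"

text \<open>Length, in the metric dr^2 + h(r)^2 dtheta^2, of the tangent vector v
  (Euclidean components) at the point z \<noteq> 0.\<close>
definition gnorm :: "(real \<Rightarrow> real) \<Rightarrow> complex \<Rightarrow> complex \<Rightarrow> real" where
  "gnorm h z v = sqrt ((Re (v * cnj z) / norm z)\<^sup>2
                     + (h (norm z) * Im (v * cnj z) / (norm z)\<^sup>2)\<^sup>2)"

definition cdiv :: "(complex \<Rightarrow> complex) \<Rightarrow> complex \<Rightarrow> real" where
  "cdiv Y z = Re (frechet_derivative Y (at z) 1) + Im (frechet_derivative Y (at z) \<i>)"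

definition test_field :: "(real \<Rightarrow> real) \<Rightarrow> (complex \<Rightarrow> complex) \<Rightarrow> bool" where
  "test_field h X \<longleftrightarrow>
     (\<exists>K. compact K \<and> 0 \<notin> K \<and> (\<forall>z. z \<notin> K \<longrightarrow> X z = 0)) \<and>
     (\<exists>X'. (\<forall>z. (X has_derivative X' z) (at z)) \<and>
           continuous_on UNIV (\<lambda>z. X' z 1) \<and> continuous_on UNIV (\<lambda>z. X' z \<i>)) \<and>
     (\<forall>z. z \<noteq> 0 \<longrightarrow> gnorm h z (X z) \<le> 1)"

text \<open>Weighted perimeter: sup over test fields X of the integral over E of the
  weighted divergence div_{f}(X) d(weighted area), which in Cartesian
  coordinates is the Euclidean divergence of (wdens * X).\<close>
definition wPerim :: "(real \<Rightarrow> real) \<Rightarrow> (real \<Rightarrow> real) \<Rightarrow> complex set \<Rightarrow> ereal" where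
  "wPerim h f E = (SUP X \<in> {X. test_field h X}.
      ereal (set_lebesgue_integral lborel E
               (cdiv (\<lambda>w. complex_of_real (wdens h f w) * X w))))"

definition isoperimetric :: "(real \<Rightarrow> real) \<Rightarrow> (real \<Rightarrow> real) \<Rightarrow> complex set \<Rightarrow> bool" where
  "isoperimetric h f A \<longleftrightarrow> A \<in> sets lebesgue \<and> wArea h f A < \<infinity> \<and>
     (\<forall>E \<in> sets lebesgue. wArea h f E = wArea h f A \<longrightarrow> wPerim h f A \<le> wPerim h f E)"

definition sph_symmetrized :: "complex set \<Rightarrow> bool" where
  "sph_symmetrized A \<longleftrightarrow> (\<forall>r>0. A \<inter> sphere 0 r = {} \<or> sphere 0 r \<subseteq> A \<or>
      (\<exists>\<phi>. 0 \<le> \<phi> \<and> \<phi> < pi \<and> A \<inter> sphere 0 r = {rcis r \<theta> | \<theta>. \<bar>\<theta>\<bar> \<le> \<phi>}))"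

end

theory Submission
  imports Defs
begin

lemma vd_Re:
  fixes g :: "real \<Rightarrow> complex"
  assumes "(g has_vector_derivative v) F"
  shows "((\<lambda>t. Re (g t)) has_real_derivative Re v) F" "((\<lambda>t. Im (g t)) has_real_derivative Im v) F"
proof -
  have e1: "(\<lambda>x. Re (x *\<^sub>R v)) = (*) (Re v)" "(\<lambda>x. Im (x *\<^sub>R v)) = (*) (Im v)" by (auto simp: fun_eq_iff)
  have "((\<lambda>t. Re (g t)) has_derivative (\<lambda>x. Re (x *\<^sub>R v))) F"
    using bounded_linear.has_derivative[OF bounded_linear_Re, of g "\<lambda>x. x *\<^sub>R v"] assms
    by (simp add: has_vector_derivative_def)
  then show "((\<lambda>t. Re (g t)) has_real_derivative Re v) F"
    unfolding has_field_derivative_def e1 .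
  have "((\<lambda>t. Im (g t)) has_derivative (\<lambda>x. Im (x *\<^sub>R v))) F"
    using bounded_linear.has_derivative[OF bounded_linear_Im, of g "\<lambda>x. x *\<^sub>R v"] assms
    by (simp add: has_vector_derivative_def)
  then show "((\<lambda>t. Im (g t)) has_real_derivative Im v) F"
    unfolding has_field_derivative_def e1 .
qed

lemma norm_deriv:
  fixes g :: "real \<Rightarrow> complex"
  assumes "(g has_vector_derivative v) (at t)" "g t \<noteq> 0"
  shows "((\<lambda>t. norm (g t)) has_real_derivative (Re (v * cnj (g t)) / norm (g t))) (at t)"
proof -
  note re = vd_Re[OF assms(1)]
  have pos: "0 < (Re (g t))\<^sup>2 + (Im (g t))\<^sup>2"
    using assms(2) by (simp add: complex_eq_iff sum_power2_gt_zero_iff)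
  have s: "((\<lambda>t. (Re (g t))\<^sup>2 + (Im (g t))\<^sup>2) has_real_derivative (2*Re(g t)*Re v + 2*Im(g t)*Im v)) (at t)"
    using DERIV_add[OF DERIV_power[OF re(1), of 2] DERIV_power[OF re(2), of 2]] by (simp add: algebra_simps)
  have A: "((\<lambda>t. sqrt ((Re (g t))\<^sup>2 + (Im (g t))\<^sup>2)) has_real_derivative
      inverse (sqrt ((Re (g t))\<^sup>2 + (Im (g t))\<^sup>2)) / 2 * (2*Re(g t)*Re v + 2*Im(g t)*Im v)) (at t)"
    using DERIV_chain2[OF DERIV_real_sqrt[OF pos] s] by simp
  have E: "inverse (sqrt ((Re (g t))\<^sup>2 + (Im (g t))\<^sup>2)) / 2 * (2 * Re (g t) * Re v + 2 * Im (g t) * Im v)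
     = Re (v * cnj (g t)) / norm (g t)"
  proof -
    have e: "2 * Re (g t) * Re v + 2 * Im (g t) * Im v = 2 * Re (v * cnj (g t))" by simp
    have h1: "inverse s / 2 * (2 * R) = R / s" for R s :: real by (simp add: field_simps)
    show ?thesis unfolding e cmod_def by (rule h1)
  qed
  show ?thesis using A[unfolded E] unfolding cmod_def .
qed



lemma even_deriv_zero:
  fixes f :: "real \<Rightarrow> real"
  assumes "DERIV f c :> D" "d > 0" "\<And>s. \<bar>s\<bar> < d \<Longrightarrow> f (c + s) = f (c - s)"
  shows "D = 0"
proof -
  have f0: "DERIV f (c + 0) :> D" "DERIV f (c - 0) :> D" using assms(1) by simp_all
  have d1: "DERIV (\<lambda>s. f (c + s)) 0 :> D * 1"
    by (rule DERIV_chain2[where g="\<lambda>s. c + s" and x=0, OF f0(1)]) (auto intro!: derivative_eq_intros)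
  have d2: "DERIV (\<lambda>s. f (c - s)) 0 :> D * (-1)"
    by (rule DERIV_chain2[where g="\<lambda>s. c - s" and x=0, OF f0(2)]) (auto intro!: derivative_eq_intros)
  have d3: "DERIV (\<lambda>s. f (c + s)) 0 :> D * (-1)"
    by (rule has_field_derivative_transform_within_open[OF d2, of "ball 0 d"]) (use assms in auto)
  from DERIV_unique[OF d1 d3] show ?thesis by simp
qed

lemma sph_mono:
  assumes "sph_symmetrized A" "z \<in> A" "norm z' = norm z" "Re z \<le> Re z'"
  shows "z' \<in> A"
proof (cases "z = 0")
  case True then show ?thesis using assms by simp
next
  case False
  define r where "r = norm z"
  have r: "r > 0" using False r_def by simp
  have zs: "z \<in> sphere 0 r" "z' \<in> sphere 0 r" using assms(3) r_def by auto
  from assms(1)[unfolded sph_symmetrized_def, rule_format, OF r]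
  consider "A \<inter> sphere 0 r = {}" | "sphere 0 r \<subseteq> A"
    | \<phi> where "0 \<le> \<phi>" "\<phi> < pi" "A \<inter> sphere 0 r = {rcis r \<theta> | \<theta>. \<bar>\<theta>\<bar> \<le> \<phi>}" by blast
  then show ?thesis
  proof cases
    case 1 then show ?thesis using zs assms(2) by blast
  next
    case 2 then show ?thesis using zs by blast
  next
    case 3
    then obtain \<theta> where th: "z = rcis r \<theta>" "\<bar>\<theta>\<bar> \<le> \<phi>" using zs assms(2) by blast
    have "Re z = r * cos \<bar>\<theta>\<bar>" using th by simp
    also have "\<dots> \<ge> r * cos \<phi>"
    proof -
      have "cos \<phi> \<le> cos \<bar>\<theta>\<bar>" using th(2) 3(1,2) by (subst cos_mono_le_eq) auto
      then show ?thesis using r by (intro mult_left_mono) auto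
    qed
    finally have "r * cos \<phi> \<le> Re z" .
    have z'e: "z' = rcis r (Arg z')" using rcis_cmod_Arg[of z'] assms(3) r_def by simp
    have "Re z' = r * cos \<bar>Arg z'\<bar>" by (subst z'e) simp
    with \<open>r * cos \<phi> \<le> Re z\<close> assms(4) r have "r * cos \<phi> \<le> r * cos \<bar>Arg z'\<bar>" by linarith
    then have "cos \<phi> \<le> cos \<bar>Arg z'\<bar>" using r by (simp add: mult_le_cancel_left_pos)
    moreover have "\<bar>Arg z'\<bar> \<le> pi" using Arg_bounded[of z'] by auto
    ultimately have "\<bar>Arg z'\<bar> \<le> \<phi>" using 3(1,2) cos_mono_le_eq[of \<phi> "\<bar>Arg z'\<bar>"] by auto
    then have "z' \<in> A \<inter> sphere 0 r" using 3(3) z'e by blast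
    then show ?thesis by blast
  qed
qed
lemma frontier_between:
  fixes A :: "complex set"
  assumes M: "\<And>z z'. z \<in> A \<Longrightarrow> norm z' = norm z \<Longrightarrow> Re z \<le> Re z' \<Longrightarrow> z' \<in> A"
    and p: "p \<in> frontier A" and q: "q \<in> frontier A"
    and n: "norm p = norm w" "norm q = norm w"
    and lt: "Re q < Re w" "Re w < Re p"
  shows "w \<in> frontier A"
proof -
  have q0: "q \<noteq> 0" and p0: "p \<noteq> 0"
    using n lt abs_Re_le_cmod[of w] abs_Re_le_cmod[of q] abs_Re_le_cmod[of p] by auto
  define u where "u = w / q"
  define v where "v = w / p"
  have nu: "norm u = 1" "norm v = 1" using n q0 p0 by (auto simp: u_def v_def norm_divide)
  have wu: "w = q * u" "w = p * v" using q0 p0 by (auto simp: u_def v_def)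
  have nu1: "norm (u - 1) \<le> 2" "norm (v - 1) \<le> 2"
    using norm_triangle_ineq4[of u 1] norm_triangle_ineq4[of v 1] nu by auto
  show ?thesis
    unfolding frontier_straddle
  proof (intro allI impI conjI)
    fix e :: real assume e: "e > 0"
    define d where "d = (Re w - Re q) / 2"
    have d: "d > 0" using lt by (simp add: d_def)
    obtain x where x: "x \<in> A" "dist q x < min e d"
      using q[unfolded frontier_straddle] e d by (meson min_less_iff_conj)
    have "norm (x * (u - 1) - q * (u - 1)) = norm (x - q) * norm (u - 1)"
      by (metis left_diff_distrib norm_mult)
    also have "\<dots> \<le> norm (x - q) * 2" using nu1 by (intro mult_left_mono) auto
    also have "\<dots> < 2 * d" using x(2) by (simp add: dist_norm norm_minus_commute)
    finally have "\<bar>Re (x * (u - 1)) - Re (q * (u - 1))\<bar> < 2 * d"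
      using abs_Re_le_cmod[of "x * (u - 1) - q * (u - 1)"] by simp
    moreover have "Re (q * (u - 1)) = 2 * d" using wu by (simp add: d_def algebra_simps)
    ultimately have "Re (x * (u - 1)) > 0" by linarith
    then have "Re x \<le> Re (x * u)" by (simp add: algebra_simps)
    moreover have "norm (x * u) = norm x" using nu by (simp add: norm_mult)
    ultimately have "x * u \<in> A" using M x(1) by blast
    moreover have "dist w (x * u) < e"
    proof -
      have "dist w (x * u) = norm ((q - x) * u)" using wu by (simp add: dist_norm algebra_simps)
      also have "\<dots> = dist q x" using nu by (simp add: norm_mult dist_norm)
      finally show ?thesis using x(2) by simp
    qed
    ultimately show "\<exists>x\<in>A. dist w x < e" by blast
  next
    fix e :: real assume e: "e > 0"
    define d where "d = (Re p - Re w) / 2"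
    have d: "d > 0" using lt by (simp add: d_def)
    obtain x where x: "x \<notin> A" "dist p x < min e d"
      using p[unfolded frontier_straddle] e d by (meson min_less_iff_conj)
    have "norm (x * (v - 1) - p * (v - 1)) = norm (x - p) * norm (v - 1)"
      by (metis left_diff_distrib norm_mult)
    also have "\<dots> \<le> norm (x - p) * 2" using nu1 by (intro mult_left_mono) auto
    also have "\<dots> < 2 * d" using x(2) by (simp add: dist_norm norm_minus_commute)
    finally have "\<bar>Re (x * (v - 1)) - Re (p * (v - 1))\<bar> < 2 * d"
      using abs_Re_le_cmod[of "x * (v - 1) - p * (v - 1)"] by simp
    moreover have "Re (p * (v - 1)) = - 2 * d" using wu by (simp add: d_def algebra_simps)
    ultimately have "Re (x * (v - 1)) < 0" by linarith
    then have "Re (x * v) \<le> Re x" by (simp add: algebra_simps)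
    moreover have "norm x = norm (x * v)" using nu by (simp add: norm_mult)
    ultimately have "x * v \<notin> A" using M x(1) by blast
    moreover have "dist w (x * v) < e"
    proof -
      have "dist w (x * v) = norm ((p - x) * v)" using wu by (simp add: dist_norm algebra_simps)
      also have "\<dots> = dist p x" using nu by (simp add: norm_mult dist_norm)
      finally show ?thesis using x(2) by simp
    qed
    ultimately show "\<exists>x. x \<notin> A \<and> dist w x < e" by blast
  qed
qed
lemma inside_cnj:
  assumes S: "cnj ` S = S" and x: "x \<in> inside S"
  shows "cnj x \<in> inside S"
proof -
  have xS: "x \<notin> S" and bd: "bounded (connected_component_set (- S) x)"
    using x by (auto simp: inside_def)
  have memS: "cnj t \<in> S \<longleftrightarrow> t \<in> S" for t
    by (metis S complex_cnj_cnj image_eqI imageE)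
  have "connected_component_set (- S) (cnj x) \<subseteq> cnj ` connected_component_set (- S) x"
  proof
    fix y assume "y \<in> connected_component_set (- S) (cnj x)"
    then obtain T where T: "connected T" "T \<subseteq> - S" "cnj x \<in> T" "y \<in> T"
      by (auto simp: connected_component_def)
    have "connected (cnj ` T)"
      by (rule connected_continuous_image[OF _ T(1)]) (intro continuous_intros)
    moreover have "cnj ` T \<subseteq> - S" using T(2) memS by auto
    moreover have "x \<in> cnj ` T" "cnj y \<in> cnj ` T" using T(3,4) by (auto intro: image_eqI[of _ _ "cnj x"])
    ultimately have "cnj y \<in> connected_component_set (- S) x"
      by (auto simp: connected_component_def)
    then show "y \<in> cnj ` connected_component_set (- S) x"
      by (metis complex_cnj_cnj image_eqI)
  qed
  moreover have "bounded (cnj ` connected_component_set (- S) x)"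
    by (rule bounded_linear_image[OF bd bounded_linear_cnj])
  ultimately have "bounded (connected_component_set (- S) (cnj x))"
    using bounded_subset by blast
  moreover have "cnj x \<notin> S" using xS memS by simp
  ultimately show ?thesis by (simp add: inside_def)
qed

lemma img_aff:
  fixes a c :: real
  assumes "c > 0"
  shows "(\<lambda>s. f (a + c * s)) ` {0..1} = f ` {a..a+c}"
proof -
  have "(\<lambda>s. f (a + c * s)) ` {0..1} = f ` ((\<lambda>s. c * s + a) ` {0..1})"
    by (simp add: image_image add.commute[of a])
  also have "(\<lambda>s. c * s + a) ` {0..1} = {a..a+c}"
    using assms by (subst image_affinity_atLeastAtMost) (auto simp: add.commute)
  finally show ?thesis .
qed

lemma vp_aff:
  fixes \<gamma> :: "real \<Rightarrow> complex"
  assumes d: "\<And>t. (\<gamma> has_vector_derivative \<gamma>' t) (at t)" and c: "continuous_on UNIV \<gamma>'"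
  shows "valid_path (\<lambda>s. \<gamma> (a + b * s))"
proof -
  have "(\<lambda>s. \<gamma> (a + b * s)) C1_differentiable_on {0..1}"
    unfolding C1_differentiable_on_def
  proof (intro exI conjI ballI)
    fix s :: real
    have "((\<lambda>s. a + b * s) has_vector_derivative b) (at s)"
      by (auto intro!: derivative_eq_intros simp: has_real_derivative_iff_has_vector_derivative[symmetric])
    from vector_diff_chain_at[OF this d]
    show "((\<lambda>s. \<gamma> (a + b * s)) has_vector_derivative b *\<^sub>R \<gamma>' (a + b * s)) (at s)"
      by (simp add: o_def)
  next
    show "continuous_on {0..1} (\<lambda>s. b *\<^sub>R \<gamma>' (a + b * s))"
      by (intro continuous_intros continuous_on_compose2[OF c]) auto
  qed
  then show ?thesis unfolding valid_path_def by (rule C1_differentiable_imp_piecewise)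
qed
lemma Im_Ln_ii:
  fixes c :: real
  assumes "c \<noteq> 0"
  shows "Im (Ln (- \<i> * of_real c)) = (if c > 0 then - pi / 2 else pi / 2)"
    "Im (Ln (\<i> * of_real c)) = (if c > 0 then pi / 2 else - pi / 2)"
proof -
  have n: "- \<i> * of_real c \<noteq> 0" "\<i> * of_real c \<noteq> 0" using assms by auto
  show "Im (Ln (- \<i> * of_real c)) = (if c > 0 then - pi / 2 else pi / 2)"
    using Im_Ln_eq_pi_half[OF n(1)] assms by (auto simp: not_less)
  show "Im (Ln (\<i> * of_real c)) = (if c > 0 then pi / 2 else - pi / 2)"
    using Im_Ln_eq_pi_half[OF n(2)] assms by (auto simp: not_less)
qed

lemma aux_field:
  fixes K A B :: complex
  assumes "K \<noteq> 0" "1 = 1/K * A + 1/K * B"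
  shows "B + A = K"
proof -
  have "1 = (A + B) / K" using assms(2) by (simp add: add_divide_distrib)
  then show ?thesis using assms(1) by (simp add: eq_divide_eq add.commute)
qed

lemma orientation:
  fixes \<gamma> \<gamma>' :: "real \<Rightarrow> complex" and \<beta> :: real
  assumes b: "\<beta> > 0"
    and d: "\<And>t. (\<gamma> has_vector_derivative \<gamma>' t) (at t)" and c: "continuous_on UNIV \<gamma>'"
    and cl: "\<gamma> (-\<beta>) = \<gamma> \<beta>"
    and inj: "inj_on \<gamma> {-\<beta>..<\<beta>}"
    and symm: "\<forall>t\<in>{-\<beta>..\<beta>}. \<gamma> (-t) = cnj (\<gamma> t)"
    and up: "\<forall>t\<in>{0<..<\<beta>}. Im (\<gamma> t) > 0" and lo: "\<forall>t\<in>{-\<beta><..<0}. Im (\<gamma> t) < 0"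
    and ax0: "Im (\<gamma> 0) = 0" and axb: "Im (\<gamma> \<beta>) = 0"
    and ccw: "\<exists>z. z \<notin> \<gamma> ` {-\<beta>..\<beta>} \<and> winding_number (\<lambda>s. \<gamma> (-\<beta> + 2 * \<beta> * s)) z = 1"
  shows "Re (\<gamma> \<beta>) < Re (\<gamma> 0)"
proof -
  define g where "g = (\<lambda>s. \<gamma> (-\<beta> + 2 * \<beta> * s))"
  define S where "S = \<gamma> ` {-\<beta>..\<beta>}"
  have pig: "path_image g = S" unfolding path_image_def g_def S_def
    using img_aff[of "2*\<beta>" \<gamma> "-\<beta>"] b by simp
  have vg: "valid_path g" unfolding g_def by (rule vp_aff[OF d c])
  have lp: "pathfinish g = pathstart g" using cl by (simp add: g_def pathfinish_def pathstart_def)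
  have sp: "simple_path g"
  proof -
    have "loop_free g" unfolding loop_free_def
    proof (intro ballI impI)
      fix x y :: real assume xy: "x \<in> {0..1}" "y \<in> {0..1}" "g x = g y"
      define tx where "tx = -\<beta> + 2*\<beta>*x"
      define ty where "ty = -\<beta> + 2*\<beta>*y"
      have "0 \<le> \<beta>*x" "\<beta>*x \<le> \<beta>" "0 \<le> \<beta>*y" "\<beta>*y \<le> \<beta>"
        using xy b by (auto intro: mult_left_le)
      then have t: "-\<beta> \<le> tx" "tx \<le> \<beta>" "-\<beta> \<le> ty" "ty \<le> \<beta>" by (auto simp: tx_def ty_def)
      have e: "\<gamma> tx = \<gamma> ty" using xy(3) by (simp add: g_def tx_def ty_def)
      have "tx = ty \<or> (tx = \<beta> \<and> ty = -\<beta>) \<or> (tx = -\<beta> \<and> ty = \<beta>)"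
      proof (cases "tx = \<beta>")
        case True
        show ?thesis
        proof (cases "ty = \<beta>")
          case False
          then have "\<gamma> (-\<beta>) = \<gamma> ty" using e True cl by simp
          then have "-\<beta> = ty" using inj t b False by (intro inj_onD[OF inj]) auto
          then show ?thesis using True by simp
        qed (use True in simp)
      next
        case False
        show ?thesis
        proof (cases "ty = \<beta>")
          case True
          then have "\<gamma> tx = \<gamma> (-\<beta>)" using e True cl by simp
          then have "tx = -\<beta>" using inj t b False by (intro inj_onD[OF inj]) auto
          then show ?thesis using True by simp
        next
          case False2: False
          then show ?thesis using e t False by (intro disjI1 inj_onD[OF inj]) auto
        qed
      qed
      then show "x = y \<or> x = 0 \<and> y = 1 \<or> x = 1 \<and> y = 0"
        using b by (auto simp: tx_def ty_def)
    qed
    then show ?thesis using vg valid_path_imp_path simple_path_def by blast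
  qed
  obtain z where z: "z \<notin> S" "winding_number g z = 1" using ccw by (auto simp: g_def S_def)
  have zin: "z \<in> inside S"
  proof -
    have "z \<notin> outside S"
    proof
      assume "z \<in> outside S"
      then have "winding_number g z = 0"
        using winding_number_zero_in_outside[of g z] valid_path_imp_path[OF vg] lp pig by simp
      with z show False by simp
    qed
    then show ?thesis using z(1) inside_Un_outside[of S] by blast
  qed
  have "(\<forall>y\<in>inside S. winding_number g y = 1) \<or> (\<forall>y\<in>inside S. winding_number g y = -1)"
    by (rule simple_closed_path_winding_number_inside[OF sp]) (auto simp: pig)
  then have wn1: "\<forall>y\<in>inside S. winding_number g y = 1" using zin z(2) by force
  have Scnj: "cnj ` S = S"
  proof
    show "cnj ` S \<subseteq> S" unfolding S_def
    proof
      fix w assume "w \<in> cnj ` \<gamma> ` {-\<beta>..\<beta>}"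
      then obtain t where "t \<in> {-\<beta>..\<beta>}" "w = cnj (\<gamma> t)" by auto
      then show "w \<in> \<gamma> ` {-\<beta>..\<beta>}" using symm by (auto intro!: image_eqI[of _ _ "-t"])
    qed
    show "S \<subseteq> cnj ` S" unfolding S_def
    proof
      fix w assume "w \<in> \<gamma> ` {-\<beta>..\<beta>}"
      then obtain t where t: "t \<in> {-\<beta>..\<beta>}" "w = \<gamma> t" by auto
      then have "w = cnj (\<gamma> (-t))" using symm[rule_format, of "-t"] by auto
      then show "w \<in> cnj ` \<gamma> ` {-\<beta>..\<beta>}" using t by auto
    qed
  qed
  have czin: "cnj z \<in> inside S" by (rule inside_cnj[OF Scnj zin])
  have "connected (inside S)" using Jordan_inside_outside[OF sp lp] pig by simp
  then have conn: "connected (Im ` inside S)"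
    by (rule connected_continuous_image[rotated]) (intro continuous_intros)
  have ii: "Im z \<in> Im ` inside S" "Im (cnj z) \<in> Im ` inside S" using zin czin by blast+
  have "0 \<in> Im ` inside S"
  proof (cases "Im z \<ge> 0")
    case True
    then show ?thesis using connectedD_interval[OF conn, of "Im (cnj z)" "Im z" 0] ii by auto
  next
    case False
    then show ?thesis using connectedD_interval[OF conn, of "Im z" "Im (cnj z)" 0] ii by auto
  qed
  then obtain x where x: "x \<in> inside S" "Im x = 0" by auto
  have xS: "x \<notin> S" using x(1) by (auto simp: inside_def)
  have wx: "winding_number g x = 1" using wn1 x(1) by blast
  define g1 where "g1 = (\<lambda>s. \<gamma> (-\<beta> + \<beta> * s))"
  define g2 where "g2 = (\<lambda>s. \<gamma> (0 + \<beta> * s))"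
  have gj: "g = g1 +++ g2"
    unfolding g_def g1_def g2_def joinpaths_def by (auto simp: fun_eq_iff algebra_simps)
  have vg1: "valid_path g1" unfolding g1_def by (rule vp_aff[OF d c])
  have vg2: "valid_path g2" unfolding g2_def by (rule vp_aff[OF d c])
  have pi1: "path_image g1 = \<gamma> ` {-\<beta>..0}" unfolding path_image_def g1_def
    using img_aff[of "\<beta>" \<gamma> "-\<beta>"] b by simp
  have pi2: "path_image g2 = \<gamma> ` {0..\<beta>}" unfolding path_image_def g2_def
    using img_aff[of "\<beta>" \<gamma> 0] b by simp
  have x1: "x \<notin> path_image g1" and x2: "x \<notin> path_image g2"
    using xS b by (auto simp: pi1 pi2 S_def)
  have ends: "pathstart g1 = \<gamma> \<beta>" "pathfinish g1 = \<gamma> 0" "pathstart g2 = \<gamma> 0" "pathfinish g2 = \<gamma> \<beta>"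
    using cl by (auto simp: pathstart_def pathfinish_def g1_def g2_def)
  have wsum: "winding_number g x = winding_number g1 x + winding_number g2 x"
    unfolding gj by (rule winding_number_join) (use valid_path_imp_path vg1 vg2 x1 x2 ends in auto)
  define F1 where "F1 = (\<lambda>w. Ln (- \<i> * (w - x)))"
  define F2 where "F2 = (\<lambda>w. Ln (\<i> * (w - x)))"
  have int2: "((\<lambda>w. 1/(w - x)) has_contour_integral (F1 (pathfinish g2) - F1 (pathstart g2))) g2"
  proof (rule contour_integral_primitive[where S="{w. 0 \<le> Im w} - {x}"])
    fix w assume w: "w \<in> {w. 0 \<le> Im w} - {x}"
    have np: "- \<i> * (w - x) \<notin> \<real>\<^sub>\<le>\<^sub>0"
      using w x(2) by (auto simp: complex_nonpos_Reals_iff complex_eq_iff)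
    have dd: "((\<lambda>w. - \<i> * (w - x)) has_field_derivative - \<i>) (at w)"
      by (auto intro!: derivative_eq_intros)
    have "(F1 has_field_derivative inverse (- \<i> * (w - x)) * (- \<i>)) (at w)"
      unfolding F1_def by (rule DERIV_chain2[OF has_field_derivative_Ln[OF np] dd])
    moreover have "inverse (- \<i> * (w - x)) * (- \<i>) = 1 / (w - x)"
      using w by (auto simp: field_simps)
    ultimately show "(F1 has_field_derivative 1 / (w - x)) (at w within {w. 0 \<le> Im w} - {x})"
      by (simp add: has_field_derivative_at_within)
  next
    show "valid_path g2" by (rule vg2)
    show "path_image g2 \<subseteq> {w. 0 \<le> Im w} - {x}"
    proof
      fix w assume "w \<in> path_image g2"
      then obtain t where t: "t \<in> {0..\<beta>}" "w = \<gamma> t" by (auto simp: pi2)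
      have "0 \<le> Im w"
        using t up ax0 axb by (cases "t = 0"; cases "t = \<beta>") (auto simp: less_eq_real_def)
      then show "w \<in> {w. 0 \<le> Im w} - {x}" using \<open>w \<in> path_image g2\<close> x2 by auto
    qed
  qed
  have int1: "((\<lambda>w. 1/(w - x)) has_contour_integral (F2 (pathfinish g1) - F2 (pathstart g1))) g1"
  proof (rule contour_integral_primitive[where S="{w. Im w \<le> 0} - {x}"])
    fix w assume w: "w \<in> {w. Im w \<le> 0} - {x}"
    have np: "\<i> * (w - x) \<notin> \<real>\<^sub>\<le>\<^sub>0"
      using w x(2) by (auto simp: complex_nonpos_Reals_iff complex_eq_iff)
    have dd: "((\<lambda>w. \<i> * (w - x)) has_field_derivative \<i>) (at w)"
      by (auto intro!: derivative_eq_intros)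
    have "(F2 has_field_derivative inverse (\<i> * (w - x)) * \<i>) (at w)"
      unfolding F2_def by (rule DERIV_chain2[OF has_field_derivative_Ln[OF np] dd])
    moreover have "inverse (\<i> * (w - x)) * \<i> = 1 / (w - x)"
      using w by (auto simp: field_simps)
    ultimately show "(F2 has_field_derivative 1 / (w - x)) (at w within {w. Im w \<le> 0} - {x})"
      by (simp add: has_field_derivative_at_within)
  next
    show "valid_path g1" by (rule vg1)
    show "path_image g1 \<subseteq> {w. Im w \<le> 0} - {x}"
    proof
      fix w assume "w \<in> path_image g1"
      then obtain t where t: "t \<in> {-\<beta>..0}" "w = \<gamma> t" by (auto simp: pi1)
      have "Im w \<le> 0"
        using t lo ax0 axb cl by (cases "t = 0"; cases "t = -\<beta>") (auto simp: less_eq_real_def)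
      then show "w \<in> {w. Im w \<le> 0} - {x}" using \<open>w \<in> path_image g1\<close> x1 by auto
    qed
  qed
  have w1: "winding_number g1 x = 1/(2*pi*\<i>) * (F2 (\<gamma> 0) - F2 (\<gamma> \<beta>))"
    using winding_number_valid_path[OF vg1 x1] contour_integral_unique[OF int1] ends by simp
  have w2: "winding_number g2 x = 1/(2*pi*\<i>) * (F1 (\<gamma> \<beta>) - F1 (\<gamma> 0))"
    using winding_number_valid_path[OF vg2 x2] contour_integral_unique[OF int2] ends by simp
  have "F1 (\<gamma> \<beta>) - F1 (\<gamma> 0) + (F2 (\<gamma> 0) - F2 (\<gamma> \<beta>)) = 2 * pi * \<i>"
  proof -
    have "1 = 1/(2*pi*\<i>) * (F2 (\<gamma> 0) - F2 (\<gamma> \<beta>)) + 1/(2*pi*\<i>) * (F1 (\<gamma> \<beta>) - F1 (\<gamma> 0))"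
      using wx wsum w1 w2 by simp
    then show ?thesis by (rule aux_field[rotated]) simp
  qed
  then have eqIm: "Im (F1 (\<gamma> \<beta>)) - Im (F1 (\<gamma> 0)) + Im (F2 (\<gamma> 0)) - Im (F2 (\<gamma> \<beta>)) = 2 * pi"
    by (simp add: complex_eq_iff)
  define a where "a = Re (\<gamma> 0) - Re x"
  define bb where "bb = Re (\<gamma> \<beta>) - Re x"
  have ea: "\<gamma> 0 - x = of_real a" and eb: "\<gamma> \<beta> - x = of_real bb"
    using ax0 axb x(2) by (auto simp: a_def bb_def complex_eq_iff)
  have "\<gamma> 0 \<in> S" "\<gamma> \<beta> \<in> S" using b by (auto simp: S_def)
  then have "\<gamma> 0 \<noteq> x" "\<gamma> \<beta> \<noteq> x" using xS by auto
  then have a0: "a \<noteq> 0" and b0: "bb \<noteq> 0" using ea eb by auto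
  have "a > 0 \<and> bb < 0"
    using eqIm Im_Ln_ii[OF a0] Im_Ln_ii[OF b0] pi_gt_zero a0 b0
    unfolding F1_def F2_def ea eb by (auto split: if_splits)
  then show ?thesis by (simp add: a_def bb_def)
qed
lemma arc_norm:
  fixes r x :: real
  assumes "\<bar>x\<bar> \<le> r"
  shows "norm (Complex x (sqrt (r\<^sup>2 - x\<^sup>2))) = r"
proof -
  have "x\<^sup>2 \<le> r\<^sup>2" using assms by (metis abs_ge_zero power2_abs power_mono)
  then show ?thesis using assms by (simp add: complex_norm)
qed

lemma arc_self:
  assumes "Im q > 0"
  shows "Complex (Re q) (sqrt ((norm q)\<^sup>2 - (Re q)\<^sup>2)) = q"
proof -
  have "(norm q)\<^sup>2 - (Re q)\<^sup>2 = (Im q)\<^sup>2" by (simp add: cmod_power2)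
  then show ?thesis using assms by (simp add: complex_eq_iff)
qed

lemma core:
  fixes \<gamma> :: "real \<Rightarrow> complex" and A :: "complex set"
  assumes b: "\<beta> > 0"
    and cont: "continuous_on UNIV \<gamma>"
    and cl: "\<gamma> (-\<beta>) = \<gamma> \<beta>"
    and inj: "inj_on \<gamma> {-\<beta>..<\<beta>}"
    and comp: "\<gamma> ` {-\<beta>..\<beta>} \<in> components (frontier A)"
    and symz: "sph_symmetrized A"
    and up: "\<forall>t\<in>{0<..<\<beta>}. Im (\<gamma> t) > 0"
    and far: "\<forall>t\<in>{-\<beta>..\<beta>}. norm (\<gamma> t) \<le> norm (\<gamma> 0)"
    and t0: "t0 \<in> {0<..<\<beta>}"
    and der: "DERIV (\<lambda>t. norm (\<gamma> t)) t0 :> l"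
  shows "l \<le> 0"
proof (rule ccontr)
  assume "\<not> l \<le> 0"
  then have l: "l > 0" by simp
  define \<rho> where "\<rho> = (\<lambda>t. norm (\<gamma> t))"
  have crho: "continuous_on UNIV \<rho>" unfolding \<rho>_def by (intro continuous_intros cont)
  obtain d1 where d1: "d1 > 0" "\<forall>h>0. h < d1 \<longrightarrow> \<rho> t0 < \<rho> (t0 + h)"
    using DERIV_pos_inc_right[OF der l] unfolding \<rho>_def by blast
  obtain d2 where d2: "d2 > 0" "\<forall>h>0. h < d2 \<longrightarrow> \<rho> (t0 - h) < \<rho> t0"
    using DERIV_pos_inc_left[OF der l] unfolding \<rho>_def by blast
  define \<epsilon> where "\<epsilon> = min (min d1 d2) (min t0 (\<beta> - t0))"
  have e: "\<epsilon> > 0" "\<epsilon> \<le> d1" "\<epsilon> \<le> d2" "\<epsilon> \<le> t0" "\<epsilon> \<le> \<beta> - t0"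
    using d1 d2 t0 by (auto simp: \<epsilon>_def)
  have locinj: "u = t0" if "\<bar>u - t0\<bar> < \<epsilon>" "\<rho> u = \<rho> t0" for u
  proof (rule ccontr)
    assume "u \<noteq> t0"
    then consider "u < t0" | "u > t0" by linarith
    then show False
    proof cases
      case 1
      have "t0 - u > 0" "t0 - u < d2" using 1 that e by auto
      then have "\<rho> (t0 - (t0 - u)) < \<rho> t0" using d2(2) by blast
      then show False using that by simp
    next
      case 2
      have "u - t0 > 0" "u - t0 < d1" using 2 that e by auto
      then have "\<rho> t0 < \<rho> (t0 + (u - t0))" using d1(2) by blast
      then show False using that by simp
    qed
  qed
  define h0 where "h0 = \<epsilon> / 2"
  have h0: "h0 > 0" "h0 < \<epsilon>" using e by (auto simp: h0_def)
  have r1: "\<rho> (t0 - h0) < \<rho> t0" using d2(2) h0 e by auto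
  have r2: "\<rho> t0 < \<rho> (t0 + h0)" using d1(2) h0 e by auto
  have r3: "\<rho> (t0 + h0) \<le> \<rho> 0" using far h0 e t0 b unfolding \<rho>_def by auto
  obtain s1 where s1: "0 \<le> s1" "s1 \<le> t0 - h0" "\<rho> s1 = \<rho> t0"
    using IVT2'[of \<rho> "t0 - h0" "\<rho> t0" 0] r1 r2 r3 h0 e continuous_on_subset[OF crho] by auto
  have s1pos: "s1 > 0" using s1 r2 r3 by (cases "s1 = 0") auto
  have s1b: "s1 \<in> {0<..<\<beta>}" using s1pos s1 h0 t0 by auto
  define p where "p = \<gamma> s1"
  define q where "q = \<gamma> t0"
  define r where "r = \<rho> t0"
  have fr: "\<gamma> ` {-\<beta>..\<beta>} \<subseteq> frontier A" using in_components_subset[OF comp] .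
  have pf: "p \<in> frontier A" and qf: "q \<in> frontier A"
    using fr s1b t0 unfolding p_def q_def by auto
  have imp: "Im p > 0" and imq: "Im q > 0" using up s1b t0 by (auto simp: p_def q_def)
  have np: "norm p = r" and nq: "norm q = r" using s1 by (auto simp: p_def q_def r_def \<rho>_def)
  have "p \<noteq> q"
  proof
    assume "p = q"
    then have "s1 = t0" using inj s1b t0 by (intro inj_onD[OF inj]) (auto simp: p_def q_def)
    then show False using s1 h0 by simp
  qed
  have Rne: "Re p \<noteq> Re q"
  proof
    assume Re: "Re p = Re q"
    have "(Im p)\<^sup>2 = (Im q)\<^sup>2"
      using np nq Re by (metis add_diff_cancel_left' cmod_power2)
    then have "Im p = Im q" using imp imq by (simp add: power2_eq_iff)
    then show False using Re \<open>p \<noteq> q\<close> by (simp add: complex_eq_iff)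
  qed
  \<comment> \<open>compactness: points of the curve near q come from times near t0\<close>
  define K where "K = {-\<beta>..\<beta>} \<inter> {u. \<epsilon> \<le> \<bar>u - t0\<bar>}"
  have "compact K"
  proof -
    have "closed K" unfolding K_def
      by (intro closed_Int closed_atLeastAtMost closed_Collect_le continuous_intros)
    moreover have "bounded K" unfolding K_def by (rule bounded_subset[of "{-\<beta>..\<beta>}"]) auto
    ultimately show ?thesis by (simp add: compact_eq_bounded_closed)
  qed
  then have "compact (\<gamma> ` K)" by (rule compact_continuous_image[OF continuous_on_subset[OF cont], rotated]) auto
  moreover have "q \<notin> \<gamma> ` K"
  proof
    assume "q \<in> \<gamma> ` K"
    then obtain u where u: "u \<in> K" "\<gamma> u = \<gamma> t0" by (auto simp: q_def)
    have "u \<noteq> t0" using u e by (auto simp: K_def)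
    show False
    proof (cases "u = \<beta>")
      case True
      then have "\<gamma> (-\<beta>) = \<gamma> t0" using u cl by simp
      then have "-\<beta> = t0" using t0 b by (intro inj_onD[OF inj]) auto
      then show False using t0 b by simp
    next
      case False
      then have "u = t0" using u t0 by (intro inj_onD[OF inj]) (auto simp: K_def)
      then show False using \<open>u \<noteq> t0\<close> by simp
    qed
  qed
  ultimately obtain \<eta> where eta: "\<eta> > 0" "\<forall>y\<in>\<gamma> ` K. \<eta> \<le> dist q y"
    using separate_point_closed[of "\<gamma> ` K" q] compact_imp_closed by blast
  define zz where "zz = (\<lambda>x. Complex x (sqrt (r\<^sup>2 - x\<^sup>2)))"
  have zzc: "continuous_on UNIV zz"
  proof -
    have "zz = (\<lambda>x. of_real x + \<i> * of_real (sqrt (r\<^sup>2 - x\<^sup>2)))"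
      by (auto simp: zz_def fun_eq_iff complex_eq_iff)
    then show ?thesis by (auto intro!: continuous_intros)
  qed
  define lo where "lo = min (Re p) (Re q)"
  define hi where "hi = max (Re p) (Re q)"
  have absR: "\<bar>Re p\<bar> \<le> r" "\<bar>Re q\<bar> \<le> r" using abs_Re_le_cmod[of p] abs_Re_le_cmod[of q] np nq by simp_all
  have zzq: "zz (Re q) = q" unfolding zz_def using arc_self[OF imq] nq by simp
  have zzp: "zz (Re p) = p" unfolding zz_def using arc_self[OF imp] np by simp
  define C where "C = zz ` {lo..hi}"
  have Cconn: "connected C" unfolding C_def
    by (rule connected_continuous_image[OF continuous_on_subset[OF zzc]]) auto
  have M: "\<And>z z'. z \<in> A \<Longrightarrow> norm z' = norm z \<Longrightarrow> Re z \<le> Re z' \<Longrightarrow> z' \<in> A"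
    using sph_mono[OF symz] by blast
  have Cfr: "C \<subseteq> frontier A"
  proof
    fix w assume "w \<in> C"
    then obtain x where x: "x \<in> {lo..hi}" "w = zz x" by (auto simp: C_def)
    have xr: "\<bar>x\<bar> \<le> r" using x(1) absR by (auto simp: lo_def hi_def)
    have nw: "norm w = r" using arc_norm[OF xr] x by (simp add: zz_def)
    have Rw: "Re w = x" using x by (simp add: zz_def)
    consider "x = Re q" | "x = Re p" | "lo < x" "x < hi" using x(1) by (force simp: lo_def hi_def)
    then show "w \<in> frontier A"
    proof cases
      case 1 then show ?thesis using x zzq qf by simp
    next
      case 2 then show ?thesis using x zzp pf by simp
    next
      case 3
      show ?thesis
      proof (cases "Re q < Re p")
        case True
        then show ?thesis using frontier_between[OF M pf qf] np nq nw Rw 3 by (auto simp: lo_def hi_def)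
      next
        case False
        then show ?thesis using frontier_between[OF M qf pf] np nq nw Rw 3 by (auto simp: lo_def hi_def)
      qed
    qed
  qed
  have qC: "q \<in> C" unfolding C_def using zzq by (auto simp: lo_def hi_def intro!: image_eqI[of _ _ "Re q"])
  have Cimg: "C \<subseteq> \<gamma> ` {-\<beta>..\<beta>}"
  proof (rule components_maximal[OF comp Cconn Cfr])
    have "q \<in> \<gamma> ` {-\<beta>..\<beta>}" using t0 by (auto simp: q_def)
    then show "\<gamma> ` {-\<beta>..\<beta>} \<inter> C \<noteq> {}" using qC by blast
  qed
  obtain \<tau> where tau: "\<tau> > 0" "\<forall>x'. dist x' (Re q) < \<tau> \<longrightarrow> dist (zz x') (zz (Re q)) < \<eta>"
    using zzc[unfolded continuous_on_iff] eta(1) by blast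
  define \<delta> where "\<delta> = Re p - Re q"
  have dne: "\<delta> \<noteq> 0" using Rne by (simp add: \<delta>_def)
  define lm where "lm = min (1/2) (\<tau> / (2 * \<bar>\<delta>\<bar>))"
  have lam: "0 < lm" "lm \<le> 1/2" "lm * \<bar>\<delta>\<bar> \<le> \<tau> / 2"
  proof -
    show "0 < lm" "lm \<le> 1/2" using tau dne by (auto simp: lm_def)
    have "lm \<le> \<tau> / (2 * \<bar>\<delta>\<bar>)" by (simp add: lm_def)
    then have "lm * \<bar>\<delta>\<bar> \<le> \<tau> / (2 * \<bar>\<delta>\<bar>) * \<bar>\<delta>\<bar>" by (rule mult_right_mono) simp
    then show "lm * \<bar>\<delta>\<bar> \<le> \<tau> / 2" using dne by simp
  qed
  define x where "x = Re q + lm * \<delta>"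
  have xin: "x \<in> {lo..hi}"
  proof -
    have xd: "x = Re q + lm * \<delta>" by (simp add: x_def)
    have Rp: "Re p = Re q + \<delta>" by (simp add: \<delta>_def)
    show ?thesis
    proof (cases "\<delta> > 0")
      case True
      have f1: "lm * \<delta> \<le> \<delta>" using lam True by (simp add: mult_left_le_one_le)
      have f2: "0 \<le> lm * \<delta>" using lam True by simp
      have "lo = Re q" "hi = Re p" using True Rp by (auto simp: lo_def hi_def)
      then show ?thesis unfolding atLeastAtMost_iff using f1 f2 xd Rp by linarith
    next
      case False
      then have neg: "\<delta> < 0" using dne by linarith
      have f1: "\<delta> \<le> lm * \<delta>"
      proof -
        have "0 \<le> (1 - lm) * (- \<delta>)" using lam(2) neg by (intro mult_nonneg_nonneg) auto
        then show ?thesis by (simp add: algebra_simps)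
      qed
      have f2: "lm * \<delta> \<le> 0" using lam(1) neg by (simp add: mult_nonneg_nonpos)
      have "lo = Re p" "hi = Re q" using neg Rp by (auto simp: lo_def hi_def)
      then show ?thesis unfolding atLeastAtMost_iff using f1 f2 xd Rp by linarith
    qed
  qed
  have xne: "x \<noteq> Re q" using lam dne by (simp add: x_def)
  have "dist x (Re q) < \<tau>"
    using lam tau by (simp add: x_def dist_real_def abs_mult)
  then have dw: "dist (zz x) q < \<eta>" using tau zzq by auto
  have "zz x \<in> \<gamma> ` {-\<beta>..\<beta>}" using Cimg xin by (auto simp: C_def)
  then obtain u where u: "u \<in> {-\<beta>..\<beta>}" "\<gamma> u = zz x" by auto
  have "u \<notin> K"
  proof
    assume "u \<in> K"
    then have "\<eta> \<le> dist q (zz x)" using eta u by auto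
    then show False using dw by (simp add: dist_commute)
  qed
  then have "\<bar>u - t0\<bar> < \<epsilon>" using u by (auto simp: K_def)
  moreover have "\<rho> u = \<rho> t0"
  proof -
    have "\<bar>x\<bar> \<le> r" using xin absR by (auto simp: lo_def hi_def)
    then have "norm (zz x) = r" using arc_norm by (simp add: zz_def)
    then show ?thesis using u by (simp add: \<rho>_def r_def)
  qed
  ultimately have "u = t0" by (rule locinj)
  then have "zz x = q" using u by (simp add: q_def)
  then have "Re (zz x) = Re q" by simp
  then show False using xne by (simp add: zz_def)
qed
lemma sgn_cnj: "z \<noteq> 0 \<Longrightarrow> sgn z * cnj z = of_real (norm z)"
proof -
  assume z: "z \<noteq> 0"
  have "z * cnj z = of_real (norm z) * of_real (norm z)"
    by (metis complex_norm_square of_real_mult power2_eq_square)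
  then show ?thesis using z by (simp add: sgn_div_norm scaleR_conv_of_real divide_simps)
qed

lemma re_formula: "z \<noteq> 0 \<Longrightarrow> Re (Complex c k * sgn z * cnj z) / norm z = c"
  by (simp add: mult.assoc sgn_cnj)

theorem lemma4p4:
  fixes h f :: "real \<Rightarrow> real" and A :: "complex set"
    and \<gamma> :: "real \<Rightarrow> complex" and \<beta> :: real and \<alpha> :: "real \<Rightarrow> real"
  assumes h_smooth: "Cinf_on {0..} h" and h_pos: "\<forall>r>0. h r > 0"
    and f_smooth: "Cinf_on {0..} f" and f_pos: "\<forall>r\<ge>0. f r > 0"
    and iso: "isoperimetric h f A"
    and symz: "sph_symmetrized A"
    and beta_pos: "\<beta> > 0"
    and gamma_smooth: "Cinf_on UNIV \<gamma>"
    and gamma_closed: "\<forall>t. \<gamma> (t + 2 * \<beta>) = \<gamma> t"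
    and gamma_simple: "inj_on \<gamma> {-\<beta>..<\<beta>}"
    and gamma_comp: "\<gamma> ` {-\<beta>..\<beta>} \<in> components (frontier A)"
    and gamma_farthest_comp: "\<forall>z\<in>frontier A. norm z \<le> norm (\<gamma> 0)"
    and gamma_ccw: "\<exists>z. z \<notin> \<gamma> ` {-\<beta>..\<beta>} \<and> winding_number (\<lambda>s. \<gamma> (-\<beta> + 2 * \<beta> * s)) z = 1"
    and gamma_arclength: "\<forall>t\<in>{-\<beta>..\<beta>}. gnorm h (\<gamma> t) (vector_derivative \<gamma> (at t)) = 1"
    and gamma_axis0: "Im (\<gamma> 0) = 0" and gamma_axis_beta: "Im (\<gamma> \<beta>) = 0"
    and gamma_symm: "\<forall>t\<in>{-\<beta>..\<beta>}. \<gamma> (-t) = cnj (\<gamma> t)"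
    and gamma_upper: "\<forall>t\<in>{0<..<\<beta>}. Im (\<gamma> t) > 0"
    and gamma_lower: "\<forall>t\<in>{-\<beta><..<0}. Im (\<gamma> t) < 0"
    and gamma0_farthest: "\<forall>t\<in>{-\<beta>..\<beta>}. norm (\<gamma> t) \<le> norm (\<gamma> 0)"
    and avoids_origin: "\<forall>t\<in>{-\<beta>..\<beta>}. \<gamma> t \<noteq> 0"
    and alpha_cont: "continuous_on {-\<beta>..\<beta>} \<alpha>"
    and alpha0_range: "0 \<le> \<alpha> 0" "\<alpha> 0 < 2 * pi"
    and alpha_angle: "\<forall>t\<in>{-\<beta>..\<beta>}. vector_derivative \<gamma> (at t) =
        Complex (cos (\<alpha> t)) (norm (\<gamma> t) * sin (\<alpha> t) / h (norm (\<gamma> t))) * sgn (\<gamma> t)"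
  shows "\<alpha> 0 = pi / 2
    \<and> (\<exists>k::int. \<alpha> (-\<beta>) = \<alpha> \<beta> + 2 * pi * of_int k)
    \<and> (\<alpha> \<beta> = pi / 2 \<or> \<alpha> \<beta> = 3 * pi / 2)
    \<and> (\<forall>t\<in>{0..\<beta>}. pi / 2 \<le> \<alpha> t \<and> \<alpha> t \<le> 3 * pi / 2)"
proof -
  obtain D where D0: "D 0 = \<gamma>"
    and Dd: "\<forall>n. \<forall>t\<in>UNIV. (D n has_vector_derivative D (Suc n) t) (at t within UNIV)"
    using gamma_smooth unfolding Cinf_on_def by blast
  define \<gamma>' where "\<gamma>' = D 1"
  have Dd': "\<And>n t. (D n has_vector_derivative D (Suc n) t) (at t)" using Dd by simp
  have d: "\<And>t. (\<gamma> has_vector_derivative \<gamma>' t) (at t)"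
  proof -
    fix t
    have "(D 0 has_vector_derivative D (Suc 0) t) (at t)" by (rule Dd')
    then show "(\<gamma> has_vector_derivative \<gamma>' t) (at t)" unfolding D0 \<gamma>'_def One_nat_def .
  qed
  have c': "continuous_on UNIV \<gamma>'"
  proof (rule continuous_at_imp_continuous_on, rule ballI)
    fix x :: real
    have "isCont (D 1) x" by (rule has_vector_derivative_continuous[OF Dd'[of 1 x]])
    then show "isCont \<gamma>' x" unfolding \<gamma>'_def .
  qed
  have c: "continuous_on UNIV \<gamma>"
    by (rule continuous_at_imp_continuous_on) (use has_vector_derivative_continuous[OF d] in blast)
  have vd: "\<And>t. vector_derivative \<gamma> (at t) = \<gamma>' t" using vector_derivative_at[OF d] by blast
  define \<rho> where "\<rho> = (\<lambda>t. norm (\<gamma> t))"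
  have ang: "\<And>t. t \<in> {-\<beta>..\<beta>} \<Longrightarrow>
      \<gamma>' t = Complex (cos (\<alpha> t)) (norm (\<gamma> t) * sin (\<alpha> t) / h (norm (\<gamma> t))) * sgn (\<gamma> t)"
    using alpha_angle vd by auto
  have rd: "DERIV \<rho> t :> cos (\<alpha> t)" if t: "t \<in> {-\<beta>..\<beta>}" for t
  proof -
    have nz: "\<gamma> t \<noteq> 0" using avoids_origin t by auto
    have "DERIV \<rho> t :> Re (\<gamma>' t * cnj (\<gamma> t)) / norm (\<gamma> t)"
      unfolding \<rho>_def by (rule norm_deriv[OF d nz])
    moreover have "Re (\<gamma>' t * cnj (\<gamma> t)) / norm (\<gamma> t) = cos (\<alpha> t)"
      unfolding ang[OF t] by (rule re_formula[OF nz])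
    ultimately show ?thesis by simp
  qed
  have cl: "\<gamma> (-\<beta>) = \<gamma> \<beta>" using gamma_closed[rule_format, of "-\<beta>"] by simp
  have bmem: "\<beta> \<in> {-\<beta>..\<beta>}" "-\<beta> \<in> {-\<beta>..\<beta>}" "0 \<in> {-\<beta>..\<beta>}" using beta_pos by auto
  have Rpos: "Re (\<gamma> 0) > 0"
  proof -
    have lt: "Re (\<gamma> \<beta>) < Re (\<gamma> 0)"
      by (rule orientation[OF beta_pos d c' cl gamma_simple gamma_symm gamma_upper gamma_lower
            gamma_axis0 gamma_axis_beta gamma_ccw])
    have "norm (\<gamma> \<beta>) \<le> norm (\<gamma> 0)" using gamma0_farthest bmem by blast
    moreover have "norm (\<gamma> \<beta>) = \<bar>Re (\<gamma> \<beta>)\<bar>" "norm (\<gamma> 0) = \<bar>Re (\<gamma> 0)\<bar>"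
      using gamma_axis0 gamma_axis_beta by (simp_all add: cmod_eq_Re)
    ultimately show ?thesis using lt by linarith
  qed
  have n0: "norm (\<gamma> 0) > 0" using avoids_origin bmem by auto
  have h0: "h (norm (\<gamma> 0)) > 0" using h_pos n0 by auto
  have cos0: "cos (\<alpha> 0) = 0"
  proof -
    have "\<forall>y. \<bar>0 - y\<bar> < \<beta> \<longrightarrow> \<rho> y \<le> \<rho> 0"
    proof (intro allI impI)
      fix y :: real assume "\<bar>0 - y\<bar> < \<beta>"
      then have "y \<in> {-\<beta>..\<beta>}" by auto
      then show "\<rho> y \<le> \<rho> 0" using gamma0_farthest by (simp add: \<rho>_def)
    qed
    from DERIV_local_max[OF rd[OF bmem(3)] beta_pos this] show ?thesis .
  qed
  have imd: "Im (\<gamma>' 0) \<ge> 0"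
  proof (rule ccontr)
    assume "\<not> Im (\<gamma>' 0) \<ge> 0"
    then have neg: "Im (\<gamma>' 0) < 0" by simp
    obtain e where e: "e > 0" "\<forall>hh>0. hh < e \<longrightarrow> Im (\<gamma> 0) > Im (\<gamma> (0 + hh))"
      using DERIV_neg_dec_right[OF vd_Re(2)[OF d[of 0]] neg] by blast
    define hh where "hh = min e \<beta> / 2"
    have hh: "hh > 0" "hh < e" "hh < \<beta>" using e beta_pos by (auto simp: hh_def)
    then have "Im (\<gamma> hh) < 0" using e gamma_axis0 by auto
    moreover have "Im (\<gamma> hh) > 0" using gamma_upper hh by auto
    ultimately show False by simp
  qed
  have sg: "sgn (\<gamma> 0) = 1"
  proof -
    define x0 where "x0 = Re (\<gamma> 0)"
    have e: "\<gamma> 0 = complex_of_real x0" using gamma_axis0 by (simp add: complex_eq_iff x0_def)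
    have "x0 > 0" using Rpos by (simp add: x0_def)
    then have "sgn (complex_of_real x0) = 1" by (simp add: sgn_div_norm scaleR_conv_of_real)
    then show ?thesis by (simp only: e)
  qed
  have "Im (\<gamma>' 0) = norm (\<gamma> 0) * sin (\<alpha> 0) / h (norm (\<gamma> 0))"
    using ang[OF bmem(3)] sg by simp
  then have "norm (\<gamma> 0) * sin (\<alpha> 0) / h (norm (\<gamma> 0)) \<ge> 0" using imd by simp
  then have "sin (\<alpha> 0) \<ge> 0" using n0 h0 by (simp add: zero_le_divide_iff zero_le_mult_iff)
  then have "\<alpha> 0 \<le> pi" using sin_lt_zero[of "\<alpha> 0"] alpha0_range by linarith
  then have alpha0: "\<alpha> 0 = pi / 2"
    using cos_inj_pi[of "\<alpha> 0" "pi/2"] cos0 alpha0_range by simp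
  have cint: "cos (\<alpha> t) \<le> 0" if t: "t \<in> {0<..<\<beta>}" for t
  proof -
    have "t \<in> {-\<beta>..\<beta>}" using t by auto
    from rd[OF this] have "DERIV (\<lambda>t. norm (\<gamma> t)) t :> cos (\<alpha> t)" by (simp add: \<rho>_def)
    then show ?thesis
      by (rule core[OF beta_pos c cl gamma_simple gamma_comp symz gamma_upper gamma0_farthest t])
  qed
  have cosb: "cos (\<alpha> \<beta>) = 0"
  proof (rule even_deriv_zero[OF rd[OF bmem(1)] beta_pos])
    fix s :: real assume s: "\<bar>s\<bar> < \<beta>"
    show "\<rho> (\<beta> + s) = \<rho> (\<beta> - s)"
    proof (cases "s \<ge> 0")
      case True
      have e1: "\<gamma> (\<beta> + s) = \<gamma> (-\<beta> + s)" using gamma_closed[rule_format, of "-\<beta> + s"] by simp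
      have "\<gamma> (- (\<beta> - s)) = cnj (\<gamma> (\<beta> - s))" using gamma_symm[rule_format, of "\<beta> - s"] s True by auto
      then show ?thesis using e1 by (simp add: \<rho>_def)
    next
      case False
      have e1: "\<gamma> (\<beta> - s) = \<gamma> (-\<beta> - s)" using gamma_closed[rule_format, of "-\<beta> - s"] by simp
      have "\<gamma> (- (\<beta> + s)) = cnj (\<gamma> (\<beta> + s))" using gamma_symm[rule_format, of "\<beta> + s"] s False by auto
      then show ?thesis using e1 by (simp add: \<rho>_def)
    qed
  qed
  have cneg: "cos (\<alpha> t) \<le> 0" if t: "t \<in> {0..\<beta>}" for t
  proof -
    consider "t = 0" | "t = \<beta>" | "t \<in> {0<..<\<beta>}" using t by fastforce
    then show ?thesis
    proof cases
      case 1 then show ?thesis using cos0 by simp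
    next
      case 2 then show ?thesis using cosb by simp
    next
      case 3 then show ?thesis by (rule cint)
    qed
  qed
  have range: "pi / 2 \<le> \<alpha> t \<and> \<alpha> t \<le> 3 * pi / 2" if t: "t \<in> {0..\<beta>}" for t
  proof
    have ct: "continuous_on {0..t} \<alpha>" using t by (intro continuous_on_subset[OF alpha_cont]) auto
    show "pi / 2 \<le> \<alpha> t"
    proof (rule ccontr)
      assume "\<not> pi / 2 \<le> \<alpha> t"
      moreover have "\<not> (- (pi/2) < \<alpha> t \<and> \<alpha> t < pi / 2)"
        using cos_gt_zero_pi[of "\<alpha> t"] cneg[OF t] by auto
      ultimately have "\<alpha> t \<le> 0" using pi_gt_zero by linarith
      moreover have "0 \<le> \<alpha> 0" using alpha0 pi_gt_zero by linarith
      moreover have "0 \<le> t" using t by simp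
      ultimately obtain s where s: "0 \<le> s" "s \<le> t" "\<alpha> s = 0"
        using IVT2'[of \<alpha> t 0 0, OF _ _ _ ct] by blast
      then have "s \<in> {0..\<beta>}" using t by simp
      then have "cos (\<alpha> s) \<le> 0" by (rule cneg)
      then show False using s by simp
    qed
    show "\<alpha> t \<le> 3 * pi / 2"
    proof (rule ccontr)
      assume a: "\<not> \<alpha> t \<le> 3 * pi / 2"
      have "\<not> (\<alpha> t < 5 * pi / 2)"
      proof
        assume "\<alpha> t < 5 * pi / 2"
        then have "cos (\<alpha> t - 2 * pi) > 0" using a by (intro cos_gt_zero_pi) auto
        then have "cos (\<alpha> t) > 0" by (metis cos_periodic diff_add_cancel)
        then show False using cneg[OF t] by simp
      qed
      then have "2 * pi \<le> \<alpha> t" using pi_gt_zero by linarith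
      moreover have "\<alpha> 0 \<le> 2 * pi" using alpha0 pi_gt_zero by linarith
      moreover have "0 \<le> t" using t by simp
      ultimately obtain s where s: "0 \<le> s" "s \<le> t" "\<alpha> s = 2 * pi"
        using IVT'[of \<alpha> 0 "2 * pi" t, OF _ _ _ ct] by blast
      then have "s \<in> {0..\<beta>}" using t by simp
      then have "cos (\<alpha> s) \<le> 0" by (rule cneg)
      then show False using s by simp
    qed
  qed
  have alphab: "\<alpha> \<beta> = pi / 2 \<or> \<alpha> \<beta> = 3 * pi / 2"
  proof (cases "\<alpha> \<beta> \<le> pi")
    case True
    then have "\<alpha> \<beta> = pi / 2" using cos_inj_pi[of "\<alpha> \<beta>" "pi/2"] cosb range[of \<beta>] beta_pos by simp
    then show ?thesis by simp
  next
    case False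
    have "cos (\<alpha> \<beta> - pi) = 0" using cosb by simp
    then have "\<alpha> \<beta> - pi = pi / 2" using cos_inj_pi[of "\<alpha> \<beta> - pi" "pi/2"] False range[of \<beta>] beta_pos by simp
    then show ?thesis by simp
  qed
  have kk: "\<exists>k::int. \<alpha> (-\<beta>) = \<alpha> \<beta> + 2 * pi * of_int k"
  proof -
    have sh: "((\<lambda>t. t + 2 * \<beta>) has_vector_derivative 1) (at (-\<beta>))"
      by (auto intro!: derivative_eq_intros simp: has_real_derivative_iff_has_vector_derivative[symmetric])
    have "((\<lambda>t. \<gamma> (t + 2 * \<beta>)) has_vector_derivative 1 *\<^sub>R \<gamma>' (-\<beta> + 2 * \<beta>)) (at (-\<beta>))"
      using vector_diff_chain_at[OF sh d] by (simp add: o_def)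
    moreover have "(\<lambda>t. \<gamma> (t + 2 * \<beta>)) = \<gamma>" using gamma_closed by auto
    ultimately have "(\<gamma> has_vector_derivative \<gamma>' \<beta>) (at (-\<beta>))" by simp
    then have gd: "\<gamma>' (-\<beta>) = \<gamma>' \<beta>" using vector_derivative_unique_at[OF d] by blast
    have nb: "\<gamma> \<beta> \<noteq> 0" using avoids_origin bmem by auto
    then have sgb: "sgn (\<gamma> \<beta>) \<noteq> 0" by (simp add: sgn_zero_iff)
    have nbp: "norm (\<gamma> \<beta>) > 0" using nb by simp
    have hb: "h (norm (\<gamma> \<beta>)) > 0" using h_pos nbp by auto
    have "Complex (cos (\<alpha> (-\<beta>))) (norm (\<gamma> \<beta>) * sin (\<alpha> (-\<beta>)) / h (norm (\<gamma> \<beta>))) * sgn (\<gamma> \<beta>)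
        = Complex (cos (\<alpha> \<beta>)) (norm (\<gamma> \<beta>) * sin (\<alpha> \<beta>) / h (norm (\<gamma> \<beta>))) * sgn (\<gamma> \<beta>)"
    proof -
      have e1: "\<gamma>' \<beta> = Complex (cos (\<alpha> (-\<beta>))) (norm (\<gamma> \<beta>) * sin (\<alpha> (-\<beta>)) / h (norm (\<gamma> \<beta>))) * sgn (\<gamma> \<beta>)"
        using ang[OF bmem(2)] unfolding cl gd .
      show ?thesis using trans[OF sym[OF e1] ang[OF bmem(1)]] .
    qed
    then have "Complex (cos (\<alpha> (-\<beta>))) (norm (\<gamma> \<beta>) * sin (\<alpha> (-\<beta>)) / h (norm (\<gamma> \<beta>)))
        = Complex (cos (\<alpha> \<beta>)) (norm (\<gamma> \<beta>) * sin (\<alpha> \<beta>) / h (norm (\<gamma> \<beta>)))"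
      using sgb by simp
    then have cs: "cos (\<alpha> (-\<beta>)) = cos (\<alpha> \<beta>)" "sin (\<alpha> (-\<beta>)) = sin (\<alpha> \<beta>)"
      using nbp hb by auto
    have "\<exists>n::int. \<alpha> (-\<beta>) = \<alpha> \<beta> + 2 * pi * n"
      using iffD1[OF sin_cos_eq_iff[of "\<alpha> (-\<beta>)" "\<alpha> \<beta>"]] cs by blast
    then show ?thesis by simp
  qed
  have rng: "\<forall>t\<in>{0..\<beta>}. pi / 2 \<le> \<alpha> t \<and> \<alpha> t \<le> 3 * pi / 2" using range by blast
  from alpha0 kk alphab rng show ?thesis by (intro conjI)
qed

end
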